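(* Let $n\ge1$, let $\mathbf{a},\mathbf{b}\in\{0,1\}^{n-1}$ and let $x,y\in\mathbb{Q}[t]$. Then in the total complex $\mathrm{Tot}(\mathcal{L}^{\mathbb{Q}}_{T^n}(\mathbb{Q}[t];\mathbb{Q}))$, in multi-degree $\mathbf{1}_n$, \[x_{(\mathbf{a},1)}\cdot y_{(\mathbf{b},1)}\sim x_{(\mathbf{a},0)}\cdot y_{(\mathbf{b},1)}+x_{(\mathbf{a},1)}\cdot y_{(\mathbf{b},0)}.\]
   Context: The $n$-chain complex $C=\mathcal{L}^{\mathbb{Q}}_{T^n}(\mathbb{Q}[t];\mathbb{Q})$: in multi-degree $\mathbf{V}=(v_1,\dots,v_n)\in\mathbb{N}^n$, $C_{\mathbf{V}}=\mathbb{Q}\otimes\bigotimes_{\mathbf{0}\neq\mathbf{v}\le\mathbf{V}}\mathbb{Q}[t]$ (tensors over $\mathbb{Q}$), i.e. elements are sums of "multi-matrices" of size $(v_1+1)\times\cdots\times(v_n+1)$ with entries in $\mathbb{Q}[t]$ at coordinates $\mathbf{v}\ne\mathbf{0}_n$ ($\mathbf{0}\le\mathbf{v}\le\mathbf{V}$ entrywise) and an entry in $\mathbb{Q}$ at $\mathbf{0}_n$, where $\mathbb{Q}$ is a $\mathbb{Q}[t]$-module via $t\mapsto0$. In direction $i$, the slices of a multi-matrix are indexed by the $i$th coordinate $j\in\{0,\dots,v_i\}$; the face map $d_{i,j}$ for $0\le j<v_i$ multiplies slice $j$ and slice $j+1$ entrywise into one slice, and $d_{i,v_i}$ multiplies slice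 $v_i$ entrywise into slice $0$ (the Hochschild face maps in each direction). Put $\mathrm{d}_i=\sum_{j=0}^{v_i}(-1)^jd_{i,j}$; the total complex $\mathrm{Tot}(C)$ has differential $\mathrm{d}=\sum_{i=1}^n(-1)^{v_1+\cdots+v_{i-1}}\mathrm{d}_i$ in component $\mathbf{V}$. We write $\mathbf{0}_m,\mathbf{1}_m$ for the constant vectors of length $m$. For $x\in\mathbb{Q}[t]$ and a coordinate $\mathbf{v}$, $x_{\mathbf{v}}$ is the multi-matrix with $x$ at $\mathbf{v}$ (its image in $\mathbb{Q}$ if $\mathbf{v}=\mathbf{0}$) and $1$ elsewhere; $x_{\mathbf{v}}\cdot y_{\mathbf{w}}$ is their product (entrywise), i.e. $x$ at $\mathbf{v}$, $y$ at $\mathbf{w}$ if $\mathbf{v}\neq\mathbf{w}$, and $xy$ at $\mathbf{v}$ if $\mathbf{v}=\mathbf{w}$. The relation $\sim$ means the two elements differ by a boundary in $\mathrm{Tot}(C)$. *)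

theory Defs
  imports "HOL-Computational_Algebra.Polynomial"
begin

text \<open>
Concrete model of the n-chain complex C = L_{T^n}(Q[t];Q).
A multi-degree V and a coordinate v are lists of naturals of length n.
The tensor product over Q of copies of Q[t] indexed by the nonzero coordinates
v <= V, tensored with Q at the zero coordinate, has as Q-basis the monomials:
exponent maps e :: nat list => nat supported on the nonzero coordinates v <= V
(the entry t^(e v) sits at coordinate v, the entry at the zero coordinate is 1).
An element of Tot(C) is a finitely supported function from pairs (V, e)
to rat, supported on valid pairs.
\<close>

definition coord_le :: "nat list \<Rightarrow> nat list \<Rightarrow> bool" where
  "coord_le v V \<longleftrightarrow> length v = length V \<and> (\<forall>k<length V. v ! k \<le> V ! k)"

definition valid_mono :: "nat \<Rightarrow> nat list \<Rightarrow> (nat list \<Rightarrow> nat) \<Rightarrow> bool" where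
  "valid_mono n V e \<longleftrightarrow> length V = n \<and>
     (\<forall>w. e w \<noteq> 0 \<longrightarrow> coord_le w V \<and> w \<noteq> replicate n 0)"

type_synonym tot = "nat list \<times> (nat list \<Rightarrow> nat) \<Rightarrow> rat"

definition is_chain :: "nat \<Rightarrow> tot \<Rightarrow> bool" where
  "is_chain n u \<longleftrightarrow> finite {p. u p \<noteq> 0} \<and> (\<forall>V e. u (V, e) \<noteq> 0 \<longrightarrow> valid_mono n V e)"

text \<open>Coordinate map of the face map d_{i,j} in direction i (0-based) from degree V:
 for j < V!i slices j and j+1 are merged; for j = V!i slice V!i is merged into slice 0.\<close>
definition merge_map :: "nat list \<Rightarrow> nat \<Rightarrow> nat \<Rightarrow> nat list \<Rightarrow> nat list" where
  "merge_map V i j v = v[i := (if j < V ! i then (if v ! i \<le> j then v ! i else v ! i - 1)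
                               else (if v ! i = V ! i then 0 else v ! i))]"

text \<open>Exponents add under entrywise multiplication of slices.\<close>
definition push_mono :: "(nat list \<Rightarrow> nat list) \<Rightarrow> (nat list \<Rightarrow> nat) \<Rightarrow> nat list \<Rightarrow> nat" where
  "push_mono \<phi> e w = (\<Sum>v\<in>{v. e v \<noteq> 0 \<and> \<phi> v = w}. e v)"

text \<open>Face map d_{i,j} on a basis monomial (V,e), as an element of Tot(C).
 If a positive power of t lands at the zero coordinate, the result is 0
 (Q is a Q[t]-module via t acting as 0).\<close>
definition face :: "nat \<Rightarrow> nat list \<Rightarrow> (nat list \<Rightarrow> nat) \<Rightarrow> nat \<Rightarrow> nat \<Rightarrow> tot" where
  "face n V e i j = (\<lambda>(W, f).
     if W = V[i := V ! i - 1] \<and> f = push_mono (merge_map V i j) e \<and> valid_mono n W f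
     then 1 else 0)"

definition dbasis :: "nat \<Rightarrow> nat list \<Rightarrow> (nat list \<Rightarrow> nat) \<Rightarrow> tot" where
  "dbasis n V e = (\<lambda>q. \<Sum>i<n. (-1::rat) ^ (\<Sum>k<i. V ! k) *
      (if V ! i = 0 then 0 else (\<Sum>j\<le>V ! i. (-1::rat) ^ j * face n V e i j q)))"

definition totd :: "nat \<Rightarrow> tot \<Rightarrow> tot" where
  "totd n u = (\<lambda>q. \<Sum>p\<in>{p. u p \<noteq> 0}. u p * dbasis n (fst p) (snd p) q)"

definition homologous :: "nat \<Rightarrow> tot \<Rightarrow> tot \<Rightarrow> bool" where
  "homologous n z w \<longleftrightarrow> (\<exists>u. is_chain n u \<and> (\<forall>q. z q - w q = totd n u q))"

text \<open>The element x_v * y_w in degree V: entry x at v, y at w (xy at v if v = w),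
 1 elsewhere; an entry at the zero coordinate is replaced by its image in Q.\<close>
definition prod2 :: "nat \<Rightarrow> nat list \<Rightarrow> nat list \<Rightarrow> rat poly \<Rightarrow> nat list \<Rightarrow> rat poly \<Rightarrow> tot" where
  "prod2 n V v x w y = (\<lambda>(W, e).
     if W = V \<and> valid_mono n V e then
       (if v = w then (if (\<forall>u. u \<noteq> v \<longrightarrow> e u = 0) then coeff (x * y) (e v) else 0)
        else (if (\<forall>u. u \<noteq> v \<and> u \<noteq> w \<longrightarrow> e u = 0) then coeff x (e v) * coeff y (e w) else 0))
     else 0)"

end

theory Submission
  imports Defs
begin

definition Em :: "nat list \<Rightarrow> nat \<Rightarrow> nat list \<Rightarrow> nat \<Rightarrow> nat list \<Rightarrow> nat" where
  "Em v i w j = (\<lambda>u. (if u = v then i else 0) + (if u = w then j else 0))"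

lemma push_Em:
  assumes "v \<noteq> w"
  shows "push_mono \<phi> (Em v i w j) = Em (\<phi> v) i (\<phi> w) j"
proof
  fix z
  let ?e = "Em v i w j"
  have "push_mono \<phi> ?e z = (\<Sum>u\<in>{u. ?e u \<noteq> 0 \<and> \<phi> u = z}. ?e u)"
    unfolding push_mono_def by simp
  also have "\<dots> = (\<Sum>u\<in>{u\<in>{v,w}. \<phi> u = z}. ?e u)"
    by (rule sum.mono_neutral_left) (auto simp: Em_def split: if_splits)
  also have "\<dots> = (\<Sum>u\<in>{v,w}. if \<phi> u = z then ?e u else 0)"
    by (rule sum.inter_filter) simp
  also have "\<dots> = Em (\<phi> v) i (\<phi> w) j z"
    using assms by (simp add: Em_def)
  finally show "push_mono \<phi> ?e z = Em (\<phi> v) i (\<phi> w) j z" .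
qed

lemma antidiag_sum:
  fixes g :: "nat \<times> nat \<Rightarrow> 'a::comm_monoid_add"
  shows "(\<Sum>p\<in>{p. fst p + snd p = m}. g p) = (\<Sum>i\<le>m. g (i, m - i))"
proof -
  have e: "{p. fst p + snd p = m} = (\<lambda>i. (i, m - i)) ` {..m}"
    by (auto simp: image_iff)
  have "inj_on (\<lambda>i. (i, m - i)) {..m}" by (simp add: inj_on_def)
  then show ?thesis unfolding e by (simp add: sum.reindex)
qed

lemma G_eq:
  fixes x y :: "rat poly"
  assumes fin: "finite I" and out: "\<And>p. p \<notin> I \<Longrightarrow> coeff x (fst p) * coeff y (snd p) = 0"
  shows "(\<Sum>p\<in>I. coeff x (fst p) * coeff y (snd p) *
           (if W = V \<and> f = Em v (fst p) w (snd p) \<and> valid_mono n W f then 1 else 0))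
         = prod2 n V v x w y (W, f)"
proof (cases "W = V \<and> valid_mono n W f")
  case False
  have "(\<Sum>p\<in>I. coeff x (fst p) * coeff y (snd p) *
           (if W = V \<and> f = Em v (fst p) w (snd p) \<and> valid_mono n W f then 1 else 0)) = 0"
    using False by (intro sum.neutral) auto
  moreover have "prod2 n V v x w y (W, f) = 0" using False by (auto simp: prod2_def)
  ultimately show ?thesis by simp
next
  case True
  let ?c = "\<lambda>p. coeff x (fst p) * coeff y (snd p)"
  have "(\<Sum>p\<in>I. ?c p * (if W = V \<and> f = Em v (fst p) w (snd p) \<and> valid_mono n W f then 1 else 0))
     = (\<Sum>p\<in>I. if f = Em v (fst p) w (snd p) then ?c p else 0)"
    using True by (intro sum.cong) auto
  also have "\<dots> = (\<Sum>p\<in>{p\<in>I. f = Em v (fst p) w (snd p)}. ?c p)"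
    by (rule sum.inter_filter[symmetric]) (rule fin)
  finally have L: "(\<Sum>p\<in>I. ?c p * (if W = V \<and> f = Em v (fst p) w (snd p) \<and> valid_mono n W f then 1 else 0))
     = (\<Sum>p\<in>{p\<in>I. f = Em v (fst p) w (snd p)}. ?c p)" .
  show ?thesis
  proof (cases "v = w")
    case False
    show ?thesis
    proof (cases "\<forall>u. u \<noteq> v \<and> u \<noteq> w \<longrightarrow> f u = 0")
      case sup: True
      have S: "{p\<in>I. f = Em v (fst p) w (snd p)} = I \<inter> {(f v, f w)}"
      proof (intro set_eqI iffI)
        fix p assume "p \<in> {p\<in>I. f = Em v (fst p) w (snd p)}"
        then have "p \<in> I" "f = Em v (fst p) w (snd p)" by auto
        then show "p \<in> I \<inter> {(f v, f w)}" using False by (cases p) (auto simp: Em_def)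
      next
        fix p assume "p \<in> I \<inter> {(f v, f w)}"
        then have "p \<in> I" "p = (f v, f w)" by auto
        moreover have "f = Em v (f v) w (f w)" using sup False by (auto simp: Em_def)
        ultimately show "p \<in> {p\<in>I. f = Em v (fst p) w (snd p)}" by auto
      qed
      have C: "(\<Sum>p\<in>I \<inter> {(f v, f w)}. ?c p) = coeff x (f v) * coeff y (f w)"
        using out[of "(f v, f w)"] by (cases "(f v, f w) \<in> I") auto
      have P: "prod2 n V v x w y (W, f) = coeff x (f v) * coeff y (f w)"
        using True False sup by (auto simp: prod2_def)
      show ?thesis unfolding L S P C ..
    next
      case nsup: False
      have S: "{p\<in>I. f = Em v (fst p) w (snd p)} = {}"
        using nsup by (auto simp: Em_def)
      have P: "prod2 n V v x w y (W, f) = 0"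
        using True False nsup by (auto simp: prod2_def)
      show ?thesis unfolding L S P by simp
    qed
  next
    case vw: True
    show ?thesis
    proof (cases "\<forall>u. u \<noteq> v \<longrightarrow> f u = 0")
      case sup: True
      have S: "{p\<in>I. f = Em v (fst p) w (snd p)} = {p\<in>I. fst p + snd p = f v}"
      proof (intro set_eqI iffI)
        fix p assume "p \<in> {p\<in>I. f = Em v (fst p) w (snd p)}"
        then show "p \<in> {p\<in>I. fst p + snd p = f v}" using vw by (auto simp: Em_def)
      next
        fix p assume "p \<in> {p\<in>I. fst p + snd p = f v}"
        then show "p \<in> {p\<in>I. f = Em v (fst p) w (snd p)}" using vw sup by (auto simp: Em_def)
      qed
      have fa: "finite {p. fst p + snd p = f v}"
        by (rule finite_subset[of _ "{..f v} \<times> {..f v}"]) auto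
      have "(\<Sum>p\<in>{p\<in>I. fst p + snd p = f v}. ?c p) = (\<Sum>p\<in>{p. fst p + snd p = f v}. ?c p)"
        by (rule sum.mono_neutral_left[OF fa]) (auto, metis fst_conv snd_conv out mult_eq_0_iff)
      also have "\<dots> = (\<Sum>i\<le>f v. coeff x i * coeff y (f v - i))"
        by (simp add: antidiag_sum)
      also have "\<dots> = coeff (x * y) (f v)" by (simp add: coeff_mult)
      finally have C: "(\<Sum>p\<in>{p\<in>I. fst p + snd p = f v}. ?c p) = coeff (x * y) (f v)" .
      have P: "prod2 n V v x w y (W, f) = coeff (x * y) (f v)"
        using True vw sup by (auto simp: prod2_def)
      show ?thesis unfolding L S P C ..
    next
      case nsup: False
      have S: "{p\<in>I. f = Em v (fst p) w (snd p)} = {}"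
        using nsup vw by (auto simp: Em_def)
      have P: "prod2 n V v x w y (W, f) = 0"
        using True vw nsup by (auto simp: prod2_def)
      show ?thesis unfolding L S P by simp
    qed
  qed
qed

lemma merge_last:
  assumes "length c = L"
  shows "merge_map (replicate L 1 @ [2]) L j (c @ [t]) =
     c @ [if j < 2 then (if t \<le> j then t else t - 1) else (if t = 2 then 0 else t)]"
  using assms by (simp add: merge_map_def nth_append list_update_append)

lemma merge01:
  assumes "length c = L" "set c \<subseteq> {0,1}" "k < L"
  shows "merge_map (replicate L 1 @ [2]) k 0 (c @ [t]) = merge_map (replicate L 1 @ [2]) k 1 (c @ [t])"
proof -
  have "c ! k \<in> {0,1}" using assms nth_mem by blast
  then show ?thesis using assms by (auto simp: merge_map_def nth_append)
qed

definition ind :: "nat \<Rightarrow> nat list \<Rightarrow> nat \<Rightarrow> nat list \<Rightarrow> nat \<Rightarrow> nat list \<Rightarrow> (nat list \<Rightarrow> nat) \<Rightarrow> rat" where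
  "ind n v i w j W f = (if W = replicate n 1 \<and> f = Em v i w j \<and> valid_mono n W f then 1 else 0)"

lemma faces_cancel:
  assumes "length a = L" "length b = L" "set a \<subseteq> {0,1}" "set b \<subseteq> {0,1}" "k < L"
  shows "face (Suc L) (replicate L 1 @ [2]) (Em (a@[1]) i (b@[2]) j) k 0 =
         face (Suc L) (replicate L 1 @ [2]) (Em (a@[1]) i (b@[2]) j) k 1"
proof -
  have ne: "a @ [1] \<noteq> b @ [2]" by simp
  show ?thesis unfolding face_def push_Em[OF ne]
    using merge01[OF assms(1,3,5)] merge01[OF assms(2,4,5)] by simp
qed

lemma face_last:
  assumes "length a = L" "length b = L"
  shows "face (Suc L) (replicate L 1 @ [2]) (Em (a@[1]) i (b@[2]) j) L k (W, f) =
     ind (Suc L) (merge_map (replicate L 1 @ [2]) L k (a@[1])) i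
                 (merge_map (replicate L 1 @ [2]) L k (b@[2])) j W f"
proof -
  have ne: "a @ [1] \<noteq> b @ [2]" by simp
  have "(replicate L 1 @ [2::nat])[L := (replicate L 1 @ [2]) ! L - 1] = replicate (Suc L) 1"
    by (simp add: list_update_append nth_append replicate_append_same)
  then show ?thesis unfolding face_def push_Em[OF ne] ind_def by simp
qed

lemma dbasis_eq:
  assumes "length a = L" "length b = L" "set a \<subseteq> {0,1}" "set b \<subseteq> {0,1}"
  shows "dbasis (Suc L) (replicate L 1 @ [2]) (Em (a@[1]) i (b@[2]) j) (W,f) =
     (-1)^L * (ind (Suc L) (a@[0]) i (b@[1]) j W f - ind (Suc L) (a@[1]) i (b@[1]) j W f
               + ind (Suc L) (a@[1]) i (b@[0]) j W f)"
proof -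
  let ?V = "replicate L 1 @ [2::nat]"
  let ?e = "Em (a@[1]) i (b@[2]) j"
  let ?T = "\<lambda>k. (-1::rat) ^ (\<Sum>m<k. ?V ! m) *
      (if ?V ! k = 0 then 0 else (\<Sum>j'\<le>?V ! k. (-1::rat) ^ j' * face (Suc L) ?V ?e k j' (W,f)))"
  have z: "?T k = 0" if "k < L" for k
  proof -
    have "?V ! k = 1" using that by (simp add: nth_append)
    moreover have "{..1::nat} = {0,1}" by auto
    ultimately show ?thesis using faces_cancel[OF assms that, of i j] by simp
  qed
  have s: "(\<Sum>m<L. ?V ! m) = L"
  proof -
    have "(\<Sum>m<L. ?V ! m) = (\<Sum>m<L. 1)" by (intro sum.cong) (auto simp: nth_append)
    then show ?thesis by simp
  qed
  have VL: "?V ! L = 2" by (simp add: nth_append)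
  have a2: "{..2::nat} = {0,1,2}" by auto
  have "dbasis (Suc L) ?V ?e (W,f) = (\<Sum>k<Suc L. ?T k)" unfolding dbasis_def by simp
  also have "\<dots> = (\<Sum>k<L. ?T k) + ?T L" by simp
  also have "(\<Sum>k<L. ?T k) = 0" using z by simp
  also have "?T L = (-1)^L * (face (Suc L) ?V ?e L 0 (W,f) - face (Suc L) ?V ?e L 1 (W,f)
       + face (Suc L) ?V ?e L 2 (W,f))"
    unfolding s VL a2 by simp
  finally show ?thesis unfolding face_last[OF assms(1,2)] merge_last[OF assms(1)] merge_last[OF assms(2)]
    by simp
qed

lemma totd_fin:
  assumes "finite P" "\<And>p. p \<notin> P \<Longrightarrow> u p = 0"
  shows "totd n u q = (\<Sum>p\<in>P. u p * dbasis n (fst p) (snd p) q)"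
  unfolding totd_def
  by (rule sum.mono_neutral_left) (use assms in auto)

lemma sign_lemma: "(-1::rat) ^ Suc L * (-1) ^ L = -1"
proof -
  have "(-1::rat) ^ L * (-1) ^ L = ((-1) * (-1)) ^ L" by (simp add: power_mult_distrib)
  then show ?thesis by simp
qed

theorem lemma4p6:
  fixes n :: nat and a b :: "nat list" and x y :: "rat poly"
  assumes "n \<ge> 1"
    and "length a = n - 1" and "length b = n - 1"
    and "set a \<subseteq> {0, 1}" and "set b \<subseteq> {0, 1}"
  shows "homologous n (prod2 n (replicate n 1) (a @ [1]) x (b @ [1]) y)
           (\<lambda>q. prod2 n (replicate n 1) (a @ [0]) x (b @ [1]) y q
              + prod2 n (replicate n 1) (a @ [1]) x (b @ [0]) y q)"
proof -
  obtain L where n: "n = Suc L" using assms(1) by (cases n) auto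
  have la: "length a = L" and lb: "length b = L" using assms(2,3) n by auto
  define V where "V = replicate L 1 @ [2::nat]"
  define A where "A = a @ [1::nat]"
  define B where "B = b @ [2::nat]"
  define I where "I = {..degree x} \<times> {..degree y}"
  define g where "g = (\<lambda>q. (V, Em A (fst q) B (snd q)))"
  define P where "P = g ` I"
  define u where "u = (\<lambda>p. if p \<in> P then (-1::rat)^n * coeff x (snd p A) * coeff y (snd p B) else 0)"
  have AB: "A \<noteq> B" by (simp add: A_def B_def)
  have EA: "Em A i B j A = i" and EB: "Em A i B j B = j" for i j using AB by (auto simp: Em_def)
  have finI: "finite I" by (simp add: I_def)
  have finP: "finite P" by (simp add: P_def finI)
  have inj: "inj_on g I"
    by (rule inj_onI) (metis EA EB g_def prod.collapse snd_conv)
  have out: "coeff x (fst p) * coeff y (snd p) = 0" if "p \<notin> I" for p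
    using that by (cases p) (auto simp: I_def coeff_eq_0)
  have valid: "valid_mono n V (Em A i B j)" for i j
  proof -
    have cA: "coord_le A V \<and> A \<noteq> replicate n 0"
    proof -
      have "A ! k \<le> V ! k" if "k < Suc L" for k
      proof (cases "k < L")
        case True
        then have "a ! k \<in> {0,1}" using assms(4) la nth_mem by blast
        then show ?thesis using True la by (auto simp: A_def V_def nth_append)
      next
        case False
        then have "k = L" using that by simp
        then show ?thesis using la by (simp add: A_def V_def nth_append)
      qed
      then have "coord_le A V" unfolding coord_le_def using la by (simp add: A_def V_def)
      moreover have "A ! L \<noteq> replicate n 0 ! L" using la n by (simp add: A_def nth_append del: replicate_Suc)
      ultimately show ?thesis by metis
    qed
    have cB: "coord_le B V \<and> B \<noteq> replicate n 0"
    proof -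
      have "B ! k \<le> V ! k" if "k < Suc L" for k
      proof (cases "k < L")
        case True
        then have "b ! k \<in> {0,1}" using assms(5) lb nth_mem by blast
        then show ?thesis using True lb by (auto simp: B_def V_def nth_append)
      next
        case False
        then have "k = L" using that by simp
        then show ?thesis using lb by (simp add: B_def V_def nth_append)
      qed
      then have "coord_le B V" unfolding coord_le_def using lb by (simp add: B_def V_def)
      moreover have "B ! L \<noteq> replicate n 0 ! L" using lb n by (simp add: B_def nth_append del: replicate_Suc)
      ultimately show ?thesis by metis
    qed
    show ?thesis unfolding valid_mono_def using cA cB n
      by (auto simp: Em_def V_def split: if_splits)
  qed
  have chain: "is_chain n u"
    unfolding is_chain_def
  proof
    show "finite {p. u p \<noteq> 0}"
      by (rule finite_subset[OF _ finP]) (auto simp: u_def split: if_splits)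
    show "\<forall>W e. u (W, e) \<noteq> 0 \<longrightarrow> valid_mono n W e"
      using valid by (auto simp: u_def P_def g_def split: if_splits)
  qed
  have key: "totd n u (W, f) =
      - prod2 n (replicate n 1) (a @ [0]) x (b @ [1]) y (W, f)
      + prod2 n (replicate n 1) (a @ [1]) x (b @ [1]) y (W, f)
      - prod2 n (replicate n 1) (a @ [1]) x (b @ [0]) y (W, f)" for W f
  proof -
    let ?c = "\<lambda>q. coeff x (fst q) * coeff y (snd q)"
    let ?i = "\<lambda>v w q. ind n v (fst q) w (snd q) W f"
    have G: "(\<Sum>q\<in>I. ?c q * ?i v w q) = prod2 n (replicate n 1) v x w y (W, f)" for v w
      unfolding ind_def by (rule G_eq[OF finI out])
    have "totd n u (W, f) = (\<Sum>p\<in>P. u p * dbasis n (fst p) (snd p) (W, f))"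
      by (rule totd_fin[OF finP]) (simp add: u_def)
    also have "\<dots> = (\<Sum>q\<in>I. u (g q) * dbasis n (fst (g q)) (snd (g q)) (W, f))"
      unfolding P_def by (simp add: sum.reindex[OF inj])
    also have "\<dots> = (\<Sum>q\<in>I. - (?c q * ?i (a@[0]) (b@[1]) q) + ?c q * ?i (a@[1]) (b@[1]) q
                             - ?c q * ?i (a@[1]) (b@[0]) q)"
    proof (rule sum.cong[OF refl])
      fix q assume "q \<in> I"
      then have ug: "u (g q) = (-1)^n * ?c q" by (simp add: u_def P_def EA EB g_def)
      have D: "dbasis n (fst (g q)) (snd (g q)) (W, f) =
         (-1)^L * (?i (a@[0]) (b@[1]) q - ?i (a@[1]) (b@[1]) q + ?i (a@[1]) (b@[0]) q)"
        unfolding g_def V_def A_def B_def n using dbasis_eq[OF la lb assms(4,5)] by simp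
      define X where "X = ?i (a@[0]) (b@[1]) q - ?i (a@[1]) (b@[1]) q + ?i (a@[1]) (b@[0]) q"
      have "u (g q) * dbasis n (fst (g q)) (snd (g q)) (W, f) = (-1)^n * ?c q * ((-1)^L * X)"
        by (simp only: ug D X_def)
      also have "\<dots> = ((-1)^Suc L * (-1)^L) * (?c q * X)" unfolding n by (simp only: mult_ac)
      also have "\<dots> = - (?c q * X)" unfolding sign_lemma by simp
      also have "\<dots> = - (?c q * ?i (a@[0]) (b@[1]) q) + ?c q * ?i (a@[1]) (b@[1]) q
                             - ?c q * ?i (a@[1]) (b@[0]) q" unfolding X_def by (simp add: algebra_simps)
      finally show "u (g q) * dbasis n (fst (g q)) (snd (g q)) (W, f) =
          - (?c q * ?i (a@[0]) (b@[1]) q) + ?c q * ?i (a@[1]) (b@[1]) q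
                             - ?c q * ?i (a@[1]) (b@[0]) q" .
    qed
    also have "\<dots> = - (\<Sum>q\<in>I. ?c q * ?i (a@[0]) (b@[1]) q) + (\<Sum>q\<in>I. ?c q * ?i (a@[1]) (b@[1]) q)
                   - (\<Sum>q\<in>I. ?c q * ?i (a@[1]) (b@[0]) q)"
      by (simp add: sum.distrib sum_subtractf sum_negf)
    finally show ?thesis by (simp only: G)
  qed
  show ?thesis unfolding homologous_def
  proof (intro exI conjI allI)
    show "is_chain n u" by (rule chain)
    fix q
    show "prod2 n (replicate n 1) (a @ [1]) x (b @ [1]) y q -
         (prod2 n (replicate n 1) (a @ [0]) x (b @ [1]) y q + prod2 n (replicate n 1) (a @ [1]) x (b @ [0]) y q)
         = totd n u q"
      using key[of "fst q" "snd q"] by simp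
  qed
qed

end
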